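(* Let $k\ge2$, let $\theta_1,\dots,\theta_k\in[-\frac{\pi}{2},\frac{\pi}{2}]$ be pairwise distinct, $\theta_{\min}=\min_{p\ne j}|\theta_p-\theta_j|$, and $a=(a_1,\dots,a_k)^T$ with $|a_j|\ge m_{\min}>0$. Let $\hat\theta_1,\dots,\hat\theta_k\in[-\frac{\pi}{2},\frac{\pi}{2}]$ be pairwise distinct and $\hat a=(\hat a_1,\dots,\hat a_k)^T\in\mathbb C^k$ such that $\|\hat A\hat a-Aa\|_2<\sigma$, where $\hat A=(\phi_{2k-1}(e^{i\hat\theta_1}),\dots,\phi_{2k-1}(e^{i\hat\theta_k}))$ and $A=(\phi_{2k-1}(e^{i\theta_1}),\dots,\phi_{2k-1}(e^{i\theta_k}))$. Then $$\|\eta_{k,k}(e^{i\theta_1},\dots,e^{i\theta_k},e^{i\hat\theta_1},\dots,e^{i\hat\theta_k})\|_\infty<\frac{2^k\pi^{k-1}}{\zeta(k)\,\theta_{\min}^{k-1}}\,\frac{\sigma}{m_{\min}}.$$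
   Context: $\phi_s(z)=(1,z,\dots,z^s)^T$. For $z_1,\dots,z_p,\hat z_1,\dots,\hat z_q\in\mathbb C$, $\eta_{p,q}(z_1,\dots,z_p,\hat z_1,\dots,\hat z_q)\in\mathbb R^p$ is the vector whose $j$-th entry is $\prod_{l=1}^q|z_j-\hat z_l|$. For an integer $k\ge1$: $\zeta(k)=\big((\tfrac{k-1}{2})!\big)^2$ if $k$ is odd, $\zeta(k)=(\tfrac{k}{2})!(\tfrac{k-2}{2})!$ if $k$ is even. *)

theory Defs
  imports "HOL-Analysis.Analysis"
begin

text \<open>Vectors are indexed 0..n-1 (functions nat => complex).\<close>

text \<open>phi_s(z) = (1,z,...,z^s)^T, entry t (t = 0..s).\<close>
definition phi :: "nat \<Rightarrow> complex \<Rightarrow> nat \<Rightarrow> complex" where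
  "phi s z t = z ^ t"

text \<open>Matrix-vector product with columns phi_s(z_j), j<k: entry t of (phi_s(z_0),...,phi_s(z_{k-1})) c.\<close>
definition vandermonde_apply :: "nat \<Rightarrow> nat \<Rightarrow> (nat \<Rightarrow> complex) \<Rightarrow> (nat \<Rightarrow> complex) \<Rightarrow> nat \<Rightarrow> complex" where
  "vandermonde_apply s k z c t = (\<Sum>j<k. phi s (z j) t * c j)"

definition norm2 :: "nat \<Rightarrow> (nat \<Rightarrow> complex) \<Rightarrow> real" where
  "norm2 n v = sqrt (\<Sum>t<n. (cmod (v t))\<^sup>2)"

definition eta :: "nat \<Rightarrow> nat \<Rightarrow> (nat \<Rightarrow> complex) \<Rightarrow> (nat \<Rightarrow> complex) \<Rightarrow> nat \<Rightarrow> real" where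
  "eta p q z zh j = (\<Prod>l<q. cmod (z j - zh l))"

definition norm_inf :: "nat \<Rightarrow> (nat \<Rightarrow> real) \<Rightarrow> real" where
  "norm_inf n v = Max ((\<lambda>j. \<bar>v j\<bar>) ` {..<n})"

definition zeta :: "nat \<Rightarrow> real" where
  "zeta k = (if odd k then (fact ((k - 1) div 2))\<^sup>2
             else fact (k div 2) * fact ((k - 2) div 2))"

end

theory Submission imports Defs "HOL-Computational_Algebra.Polynomial" begin


lemma jordan_ineq:
  fixes x :: real assumes "0 \<le> x" "x \<le> pi/2" shows "2 * x / pi \<le> sin x"
proof -
  have cv: "convex_on {0..pi/2} (\<lambda>x. - sin x)"
  proof (rule convex_on_realI[where f'="\<lambda>x. - cos x"])
    show "connected {0..pi/2::real}" by simp
    show "((\<lambda>x. - sin x) has_real_derivative - cos x) (at x)" for x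
      by (auto intro!: derivative_eq_intros)
    show "- cos x \<le> - cos y" if "x \<in> {0..pi/2}" "y \<in> {0..pi/2}" "x \<le> y" for x y
      using that by (auto intro!: cos_monotone_0_pi_le)
  qed
  define t where "t = 2 * x / pi"
  have t: "0 \<le> t" "t \<le> 1" using assms pi_gt_zero unfolding t_def by (auto simp: field_simps)
  have "(1 - t) *\<^sub>R 0 + t *\<^sub>R (pi/2) = x" unfolding t_def by simp
  hence "- sin x \<le> (1 - t) * (- sin 0) + t * (- sin (pi/2))"
    using convex_onD[OF cv, of t 0 "pi/2"] t by auto
  thus ?thesis unfolding t_def by simp
qed

lemma cis_diff_norm:
  fixes a b :: real assumes "\<bar>a - b\<bar> \<le> pi"
  shows "2 / pi * \<bar>a - b\<bar> \<le> cmod (cis a - cis b)"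
proof -
  have sq: "(cmod (cis a - cis b))^2 = (2 * sin ((a - b)/2))^2"
  proof -
    have "(cmod (cis a - cis b))^2 = (cos a - cos b)^2 + (sin a - sin b)^2"
      by (simp add: cmod_power2)
    also have "\<dots> = 2 - 2 * cos (a - b)"
      by (simp add: power2_eq_square cos_diff algebra_simps)
    also have "\<dots> = (2 * sin ((a - b)/2))^2"
    proof -
      have "a - b = 2 * ((a - b)/2)" by simp
      then have "cos (a - b) = 1 - 2 * sin ((a-b)/2) ^ 2"
        by (metis cos_double_sin)
      thus ?thesis by (simp add: power_mult_distrib)
    qed
    finally show ?thesis .
  qed
  hence eq: "cmod (cis a - cis b) = 2 * \<bar>sin ((a - b)/2)\<bar>"
    by (metis abs_mult abs_norm_cancel abs_numeral power2_eq_iff_nonneg abs_ge_zero mult_nonneg_nonneg zero_le_numeral norm_ge_zero power2_abs)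
  have "\<bar>sin ((a - b)/2)\<bar> = sin (\<bar>a - b\<bar>/2)"
  proof (cases "a \<ge> b")
    case True
    hence "0 \<le> sin ((a - b)/2)" using assms by (intro sin_ge_zero) auto
    thus ?thesis using True by simp
  next
    case False
    hence "0 \<le> sin ((b - a)/2)" using assms by (intro sin_ge_zero) auto
    moreover have "sin ((a - b)/2) = - sin ((b - a)/2)"
      by (metis minus_diff_eq minus_divide_left sin_minus)
    ultimately show ?thesis using False by simp
  qed
  moreover have "2 * (\<bar>a - b\<bar>/2) / pi \<le> sin (\<bar>a - b\<bar>/2)"
    using assms by (intro jordan_ineq) auto
  ultimately show ?thesis using eq by (simp add: field_simps)
qed



fun rp :: "complex list \<Rightarrow> complex poly" where
  "rp [] = 1" | "rp (w # ws) = [:-w, 1:] * rp ws"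

lemma poly_rp: "poly (rp ws) z = prod_list (map (\<lambda>w. z - w) ws)"
  by (induct ws) (auto simp: algebra_simps)

lemma coeff_rp:
  assumes "\<forall>w\<in>set ws. cmod w \<le> 1"
  shows "cmod (coeff (rp ws) t) \<le> real (length ws choose t)"
  using assms
proof (induct ws arbitrary: t)
  case Nil thus ?case by (auto simp: coeff_1)
next
  case (Cons w ws)
  have e: "rp (w # ws) = smult (-w) (rp ws) + pCons 0 (rp ws)"
    by (simp add: mult_pCons_left)
  have hw: "cmod w \<le> 1" using Cons by simp
  show ?case
  proof (cases t)
    case 0
    have "cmod (coeff (rp (w # ws)) t) = cmod w * cmod (coeff (rp ws) 0)"
      using 0 by (simp add: e norm_mult)
    also have "\<dots> \<le> 1 * 1"
      using Cons(1)[of 0] Cons(2) hw by (intro mult_mono) auto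
    finally show ?thesis using 0 by simp
  next
    case (Suc m)
    have "cmod (coeff (rp (w # ws)) t) = cmod (- w * coeff (rp ws) (Suc m) + coeff (rp ws) m)"
      using Suc by (simp add: e)
    also have "\<dots> \<le> cmod w * cmod (coeff (rp ws) (Suc m)) + cmod (coeff (rp ws) m)"
      by (metis norm_minus_cancel norm_mult norm_triangle_ineq)
    also have "\<dots> \<le> 1 * real (length ws choose Suc m) + real (length ws choose m)"
      using Cons(1)[of "Suc m"] Cons(1)[of m] Cons(2) hw
      by (intro add_mono mult_mono) auto
    also have "\<dots> = real (length (w # ws) choose t)" using Suc by simp
    finally show ?thesis .
  qed
qed

lemma poly_rp_sum:
  assumes "\<forall>w\<in>set ws. cmod w \<le> 1" "length ws < N"
  shows "poly (rp ws) z = (\<Sum>t<N. coeff (rp ws) t * z ^ t)"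
proof -
  have z: "coeff (rp ws) t = 0" if "t > length ws" for t
    using coeff_rp[OF assms(1), of t] that by (simp add: binomial_eq_0)
  hence dg: "degree (rp ws) \<le> length ws" by (intro degree_le) auto
  have "poly (rp ws) z = (\<Sum>t\<le>degree (rp ws). coeff (rp ws) t * z ^ t)" by (rule poly_altdef)
  also have "\<dots> = (\<Sum>t<N. coeff (rp ws) t * z ^ t)"
  proof (rule sum.mono_neutral_left)
    show "{..degree (rp ws)} \<subseteq> {..<N}" using dg assms(2) by auto
    show "\<forall>i\<in>{..<N} - {..degree (rp ws)}. coeff (rp ws) i * z ^ i = 0"
      by (auto simp: coeff_eq_0)
  qed auto
  finally show ?thesis .
qed

lemma coeff_rp_sum:
  assumes "\<forall>w\<in>set ws. cmod w \<le> 1"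
  shows "(\<Sum>t<Suc (length ws). cmod (coeff (rp ws) t)) \<le> 2 ^ length ws"
proof -
  have "(\<Sum>t<Suc (length ws). cmod (coeff (rp ws) t)) \<le> (\<Sum>t\<le>length ws. real (length ws choose t))"
    unfolding lessThan_Suc_atMost by (intro sum_mono coeff_rp assms)
  also have "\<dots> = 2 ^ length ws"
    using choose_row_sum[of "length ws"] by (metis of_nat_numeral of_nat_power of_nat_sum)
  finally show ?thesis .
qed

lemma up_prod:
  fixes T :: "real set"
  assumes "finite T" "d > 0" "\<forall>t\<in>T. t - x \<ge> d" "\<forall>s\<in>T. \<forall>t\<in>T. s \<noteq> t \<longrightarrow> \<bar>s - t\<bar> \<ge> d"
  shows "(T \<noteq> {} \<longrightarrow> Max T - x \<ge> d * card T) \<and> (\<Prod>t\<in>T. t - x) \<ge> d ^ card T * fact (card T)"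
  using assms
proof (induction "card T" arbitrary: T)
  case 0 thus ?case by simp
next
  case (Suc n)
  have ne: "T \<noteq> {}" using Suc(2) by auto
  define m where "m = Max T"
  have mT: "m \<in> T" using Max_in[OF Suc(3) ne] m_def by simp
  define T' where "T' = T - {m}"
  have cT': "card T' = n" using Suc(2) mT T'_def by simp
  have IH: "(T' \<noteq> {} \<longrightarrow> Max T' - x \<ge> d * card T') \<and> (\<Prod>t\<in>T'. t - x) \<ge> d ^ card T' * fact (card T')"
    using Suc(1)[OF cT'[symmetric]] Suc(3-6) T'_def by auto
  have pos: "(\<Prod>t\<in>T'. t - x) \<ge> 0"
    using Suc(5) Suc(4) T'_def by (intro prod_nonneg) (smt (verit) DiffD1)
  have mx: "m - x \<ge> d * Suc n"
  proof (cases "T' = {}")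
    case True thus ?thesis using cT' Suc(5) mT by auto
  next
    case False
    have fin: "finite T'" using Suc(3) T'_def by simp
    have M: "Max T' \<in> T'" using Max_in[OF fin False] .
    hence "Max T' \<le> m" "Max T' \<noteq> m" using T'_def m_def Suc(3) by auto
    moreover have "\<bar>m - Max T'\<bar> \<ge> d" using Suc(6) M mT T'_def by auto
    ultimately have "m - Max T' \<ge> d" by linarith
    thus ?thesis using IH False cT' by (simp add: algebra_simps)
  qed
  have "(\<Prod>t\<in>T. t - x) = (m - x) * (\<Prod>t\<in>T'. t - x)"
    using prod.remove[OF Suc(3) mT] T'_def by simp
  also have "\<dots> \<ge> (d * Suc n) * (d ^ n * fact n)"
  proof -
    have "0 \<le> d * Suc n" using Suc(4) by simp
    hence "0 \<le> m - x" using mx by linarith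
    thus ?thesis using IH cT' mx pos Suc(4) by (intro mult_mono) auto
  qed
  finally have "(\<Prod>t\<in>T. t - x) \<ge> d ^ card T * fact (card T)"
    using Suc(2)[symmetric] by (simp add: algebra_simps)
  moreover have "Max T - x \<ge> d * card T" using mx m_def Suc(2) by simp
  ultimately show ?case by simp
qed

lemma two_side_prod:
  fixes T :: "real set"
  assumes "finite T" "d > 0" "x \<notin> T" "\<forall>t\<in>T. \<bar>t - x\<bar> \<ge> d"
    "\<forall>s\<in>T. \<forall>t\<in>T. s \<noteq> t \<longrightarrow> \<bar>s - t\<bar> \<ge> d"
  shows "(\<Prod>t\<in>T. \<bar>t - x\<bar>) \<ge> d ^ card T * (fact (card {t\<in>T. t < x}) * fact (card {t\<in>T. t > x}))"
proof -
  define U where "U = {t\<in>T. t > x}"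
  define L where "L = {t\<in>T. t < x}"
  have fU: "finite U" and fL: "finite L" using assms(1) U_def L_def by auto
  have TUL: "T = U \<union> L" and dis: "U \<inter> L = {}" using assms(3) U_def L_def by auto
  have pU: "(\<Prod>t\<in>U. t - x) \<ge> d ^ card U * fact (card U)"
  proof -
    have "\<forall>t\<in>U. d \<le> t - x" using assms(4) U_def by auto
    moreover have "\<forall>s\<in>U. \<forall>t\<in>U. s \<noteq> t \<longrightarrow> \<bar>s - t\<bar> \<ge> d" using assms(5) U_def by auto
    ultimately show ?thesis using up_prod[OF fU assms(2), of x] by blast
  qed
  define V where "V = uminus ` L"
  have inj: "inj_on uminus L" by (simp add: inj_on_def)
  have fV: "finite V" using fL V_def by simp
  have cV: "card V = card L" using card_image[OF inj] V_def by simp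
  have pV: "(\<Prod>t\<in>V. t - (-x)) \<ge> d ^ card V * fact (card V)"
    using up_prod[OF fV assms(2), of "-x"] assms(4,5) V_def L_def by force
  have "(\<Prod>t\<in>V. t - (-x)) = (\<Prod>t\<in>L. \<bar>t - x\<bar>)"
    unfolding V_def using L_def by (subst prod.reindex[OF inj]) (auto intro!: prod.cong)
  hence pL: "(\<Prod>t\<in>L. \<bar>t - x\<bar>) \<ge> d ^ card L * fact (card L)" using pV cV by simp
  have pU': "(\<Prod>t\<in>U. \<bar>t - x\<bar>) \<ge> d ^ card U * fact (card U)"
    using pU U_def by (smt (verit, best) mem_Collect_eq prod.cong)
  have "(\<Prod>t\<in>T. \<bar>t - x\<bar>) = (\<Prod>t\<in>U. \<bar>t - x\<bar>) * (\<Prod>t\<in>L. \<bar>t - x\<bar>)"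
    using TUL dis fU fL by (simp add: prod.union_disjoint)
  also have "\<dots> \<ge> (d ^ card U * fact (card U)) * (d ^ card L * fact (card L))"
    using pU' pL assms(2) by (intro mult_mono) (auto intro: prod_nonneg)
  finally have "(\<Prod>t\<in>T. \<bar>t - x\<bar>) \<ge> d ^ (card U + card L) * (fact (card L) * fact (card U))"
    by (simp add: power_add algebra_simps)
  moreover have "card T = card U + card L" using TUL dis fU fL card_Un_disjoint by simp
  ultimately show ?thesis using U_def L_def by simp
qed

lemma fact_split: "a + b = n \<Longrightarrow> fact (n div 2) * fact (n - n div 2) \<le> (fact a * fact b :: nat)"
proof -
  assume h: "a + b = n"
  have e1: "fact a * fact b * (n choose a) = fact n"
    using binomial_fact_lemma[of a n] h by (metis add_diff_cancel_left' le_add1)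
  have e2: "fact (n div 2) * fact (n - n div 2) * (n choose (n div 2)) = fact n"
    by (rule binomial_fact_lemma) simp
  have le: "n choose a \<le> n choose (n div 2)" by (rule binomial_maximum)
  have pos: "n choose a > 0" using h by simp
  show ?thesis
  proof (rule ccontr)
    assume "\<not> ?thesis"
    hence "fact a * fact b < fact (n div 2) * (fact (n - n div 2) :: nat)" by simp
    hence "fact a * fact b * (n choose a) < fact (n div 2) * fact (n - n div 2) * (n choose (n div 2))"
      using le pos mult_less_le_imp_less[of "fact a * fact b" "fact (n div 2) * fact (n - n div 2)" "n choose a" "n choose (n div 2)"] by auto
    thus False using e1 e2 by simp
  qed
qed

lemma zeta_le: "k \<ge> 1 \<Longrightarrow> a + b = k - 1 \<Longrightarrow> zeta k \<le> fact a * fact b"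
proof -
  assume k: "k \<ge> 1" and ab: "a + b = k - 1"
  have "fact ((k-1) div 2) * fact ((k-1) - (k-1) div 2) \<le> (fact a * fact b :: nat)"
    using fact_split[OF ab] .
  hence r: "real (fact ((k-1) div 2) * fact ((k-1) - (k-1) div 2)) \<le> fact a * fact b"
    by (metis of_nat_fact of_nat_le_iff of_nat_mult)
  have "zeta k = real (fact ((k-1) div 2) * fact ((k-1) - (k-1) div 2))"
  proof (cases "odd k")
    case True
    then obtain m where "k = 2*m+1" by (metis oddE)
    thus ?thesis using True by (simp add: zeta_def power2_eq_square)
  next
    case False
    then obtain m where m: "k = 2*m" by blast
    with k have "m \<ge> 1" by simp
    then obtain q where "m = Suc q" by (cases m) auto
    thus ?thesis using False m by (simp add: zeta_def algebra_simps)
  qed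
  thus ?thesis using r by simp
qed



lemma swap_help:
  fixes c :: "nat \<Rightarrow> complex"
  shows "(\<Sum>t<N. c t * (\<Sum>l<K. f l ^ t * g l)) = (\<Sum>l<K. g l * (\<Sum>t<N. c t * f l ^ t))"
  by (simp add: sum_distrib_left sum_distrib_right mult_ac sum.swap[of _ "{..<N}"])

lemma prod_list_upt: "prod_list (map f [0..<k]) = (\<Prod>l<k. f l)"
  by (metis atLeast0LessThan distinct_upt prod.distinct_set_conv_list set_upt)

lemma prod_list_filt: "prod_list (map f (filter (\<lambda>p. p \<noteq> j) [0..<k])) = (\<Prod>p\<in>{..<k} - {j}. f p)"
proof -
  have "set (filter (\<lambda>p. p \<noteq> j) [0..<k]) = {..<k} - {j}" by auto
  thus ?thesis by (metis distinct_filter distinct_upt prod.distinct_set_conv_list)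
qed

lemma len_filt: "j < k \<Longrightarrow> length (filter (\<lambda>p. p \<noteq> j) [0..<k]) = k - 1"
proof -
  assume "j < k"
  have "set (filter (\<lambda>p. p \<noteq> j) [0..<k]) = {..<k} - {j}" by auto
  hence "card ({..<k} - {j}) = length (filter (\<lambda>p. p \<noteq> j) [0..<k])"
    by (metis distinct_card distinct_filter distinct_upt)
  thus ?thesis using \<open>j < k\<close> by simp
qed



theorem theorem3p3:
  fixes k :: nat and \<theta> \<theta>h :: "nat \<Rightarrow> real" and a ah :: "nat \<Rightarrow> complex"
    and m_min \<sigma> :: real
  assumes hk: "k \<ge> 2"
    and h\<theta>: "\<forall>j<k. \<theta> j \<in> {-pi/2..pi/2}"
    and h\<theta>dist: "\<forall>p<k. \<forall>j<k. p \<noteq> j \<longrightarrow> \<theta> p \<noteq> \<theta> j"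
    and hm: "m_min > 0"
    and ha: "\<forall>j<k. cmod (a j) \<ge> m_min"
    and h\<theta>h: "\<forall>j<k. \<theta>h j \<in> {-pi/2..pi/2}"
    and h\<theta>hdist: "\<forall>p<k. \<forall>j<k. p \<noteq> j \<longrightarrow> \<theta>h p \<noteq> \<theta>h j"
    and hres: "norm2 (2*k) (\<lambda>t. vandermonde_apply (2*k-1) k (\<lambda>j. cis (\<theta>h j)) ah t
                               - vandermonde_apply (2*k-1) k (\<lambda>j. cis (\<theta> j)) a t) < \<sigma>"
  shows "let \<theta>_min = Min {\<bar>\<theta> p - \<theta> j\<bar> | p j. p < k \<and> j < k \<and> p \<noteq> j} in
         norm_inf k (eta k k (\<lambda>j. cis (\<theta> j)) (\<lambda>j. cis (\<theta>h j)))
           < 2^k * pi^(k-1) / (zeta k * \<theta>_min^(k-1)) * (\<sigma> / m_min)"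
proof -
  define z where "z = (\<lambda>j. cis (\<theta> j))"
  define zh where "zh = (\<lambda>j. cis (\<theta>h j))"
  define M where "M = {\<bar>\<theta> p - \<theta> j\<bar> | p j. p < k \<and> j < k \<and> p \<noteq> j}"
  define tm where "tm = Min M"
  define r where "r = (\<lambda>t. vandermonde_apply (2*k-1) k zh ah t - vandermonde_apply (2*k-1) k z a t)"
  define N where "N = norm2 (2*k) r"
  define B where "B = 2^k * pi^(k-1) / (zeta k * tm^(k-1)) * (\<sigma> / m_min)"
  have finM: "finite M"
  proof -
    have "M \<subseteq> (\<lambda>(p,j). \<bar>\<theta> p - \<theta> j\<bar>) ` ({..<k} \<times> {..<k})" unfolding M_def by auto
    thus ?thesis by (rule finite_subset) auto
  qed
  have "\<bar>\<theta> 0 - \<theta> 1\<bar> \<in> M" unfolding M_def using hk by force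
  hence neM: "M \<noteq> {}" by auto
  have tm_pos: "tm > 0"
  proof -
    have "tm \<in> M" unfolding tm_def using Min_in[OF finM neM] .
    thus ?thesis unfolding M_def using h\<theta>dist by auto
  qed
  have tm_le: "tm \<le> \<bar>\<theta> p - \<theta> j\<bar>" if "p < k" "j < k" "p \<noteq> j" for p j
    unfolding tm_def using that finM by (intro Min_le) (auto simp: M_def)
  have rt: "cmod (r t) \<le> N" if "t < 2*k" for t
  proof -
    have "cmod (r t) = sqrt ((cmod (r t))^2)" by simp
    also have "\<dots> \<le> sqrt (\<Sum>t<2*k. (cmod (r t))^2)"
      using that by (intro real_sqrt_le_mono member_le_sum) auto
    finally show ?thesis unfolding N_def norm2_def .
  qed
  have NS: "N < \<sigma>" using hres unfolding N_def r_def z_def zh_def .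
  have zeta_pos: "zeta k > 0" unfolding zeta_def by auto
  have key: "eta k k z zh j < B" if jk: "j < k" for j
  proof -
    define S where "S = {..<k} - {j}"
    define ws where "ws = map zh [0..<k] @ map z (filter (\<lambda>p. p \<noteq> j) [0..<k])"
    have wsn: "\<forall>w\<in>set ws. cmod w \<le> 1" unfolding ws_def z_def zh_def by auto
    have lws: "length ws = 2*k - 1" unfolding ws_def using len_filt[OF jk] hk by simp
    define c where "c = coeff (rp ws)"
    have polysum: "poly (rp ws) u = (\<Sum>t<2*k. c t * u^t)" for u
      unfolding c_def using poly_rp_sum[OF wsn] lws hk by simp
    have csum: "(\<Sum>t<2*k. cmod (c t)) \<le> 2^(2*k-1)"
      using coeff_rp_sum[OF wsn] lws hk unfolding c_def by (metis Suc_diff_1 le_add_diff_inverse2 mult_2 nat_1_add_1 add_less_cancel_left le_add2 less_le_trans pos2)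
    have zero_h: "poly (rp ws) (zh l) = 0" if "l < k" for l
      unfolding poly_rp using that by (auto simp: ws_def prod_list_zero_iff)
    have zero_z: "poly (rp ws) (z p) = 0" if "p < k" "p \<noteq> j" for p
      unfolding poly_rp using that by (auto simp: ws_def prod_list_zero_iff)
    have rform: "r t = (\<Sum>l<k. zh l ^ t * ah l) - (\<Sum>p<k. z p ^ t * a p)" for t
      unfolding r_def vandermonde_apply_def phi_def ..
    have "(\<Sum>t<2*k. c t * r t) = (\<Sum>t<2*k. c t * (\<Sum>l<k. zh l ^ t * ah l)) - (\<Sum>t<2*k. c t * (\<Sum>p<k. z p ^ t * a p))"
      unfolding rform by (simp add: right_diff_distrib sum_subtractf)
    also have "\<dots> = (\<Sum>l<k. ah l * poly (rp ws) (zh l)) - (\<Sum>p<k. a p * poly (rp ws) (z p))"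
      unfolding swap_help polysum ..
    also have "(\<Sum>l<k. ah l * poly (rp ws) (zh l)) = 0" using zero_h by simp
    also have "(\<Sum>p<k. a p * poly (rp ws) (z p)) = a j * poly (rp ws) (z j)"
    proof -
      have "(\<Sum>p<k. a p * poly (rp ws) (z p)) = a j * poly (rp ws) (z j) + (\<Sum>p\<in>{..<k} - {j}. a p * poly (rp ws) (z p))"
        using jk by (subst sum.remove[of _ j]) auto
      also have "(\<Sum>p\<in>{..<k} - {j}. a p * poly (rp ws) (z p)) = 0" using zero_z by simp
      finally show ?thesis by simp
    qed
    finally have ident: "(\<Sum>t<2*k. c t * r t) = - (a j * poly (rp ws) (z j))" by simp
    have bound: "cmod (a j * poly (rp ws) (z j)) \<le> 2^(2*k-1) * N"
    proof -
      have "cmod (a j * poly (rp ws) (z j)) = cmod (\<Sum>t<2*k. c t * r t)" using ident by simp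
      also have "\<dots> \<le> (\<Sum>t<2*k. cmod (c t) * cmod (r t))"
        by (metis (no_types, lifting) norm_mult norm_sum sum.cong)
      also have "\<dots> \<le> (\<Sum>t<2*k. cmod (c t) * N)"
        using rt by (intro sum_mono mult_left_mono) auto
      also have "\<dots> = (\<Sum>t<2*k. cmod (c t)) * N" by (simp add: sum_distrib_right)
      also have "\<dots> \<le> 2^(2*k-1) * N"
        using csum rt[of 0] hk norm_ge_zero[of "r 0"] by (intro mult_right_mono) linarith+
      finally show ?thesis .
    qed
    have peq: "cmod (poly (rp ws) (z j)) = eta k k z zh j * (\<Prod>p\<in>S. cmod (z j - z p))"
      unfolding poly_rp ws_def eta_def S_def
      by (simp add: map_map comp_def prod_list_upt prod_list_filt norm_mult prod_norm)
    have cS: "card S = k - 1" unfolding S_def using jk by simp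
    have finS: "finite S" unfolding S_def by simp
    have Lbound: "(\<Prod>p\<in>S. cmod (z j - z p)) \<ge> (2/pi)^(k-1) * (zeta k * tm^(k-1))"
    proof -
      have "(\<Prod>p\<in>S. cmod (z j - z p)) \<ge> (\<Prod>p\<in>S. 2/pi * \<bar>\<theta> j - \<theta> p\<bar>)"
      proof (rule prod_mono, safe)
        fix p assume "p \<in> S"
        hence "p < k" unfolding S_def by auto
        hence "\<theta> p \<in> {-pi/2..pi/2}" "\<theta> j \<in> {-pi/2..pi/2}" using h\<theta> jk by auto
        hence "\<bar>\<theta> j - \<theta> p\<bar> \<le> pi" by auto
        thus "2/pi * \<bar>\<theta> j - \<theta> p\<bar> \<le> cmod (z j - z p)" unfolding z_def by (rule cis_diff_norm)
      qed auto
      also have "(\<Prod>p\<in>S. 2/pi * \<bar>\<theta> j - \<theta> p\<bar>) = (2/pi)^(k-1) * (\<Prod>p\<in>S. \<bar>\<theta> j - \<theta> p\<bar>)"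
        by (simp only: prod.distrib prod_constant cS)
      finally have s1: "(\<Prod>p\<in>S. cmod (z j - z p)) \<ge> (2/pi)^(k-1) * (\<Prod>p\<in>S. \<bar>\<theta> j - \<theta> p\<bar>)" .
      define T where "T = \<theta> ` S"
      have inj: "inj_on \<theta> S" unfolding S_def inj_on_def using h\<theta>dist by auto
      have cT: "card T = k - 1" unfolding T_def using card_image[OF inj] cS by simp
      have finT: "finite T" unfolding T_def using finS by simp
      have pT: "(\<Prod>p\<in>S. \<bar>\<theta> j - \<theta> p\<bar>) = (\<Prod>t\<in>T. \<bar>t - \<theta> j\<bar>)"
        unfolding T_def by (subst prod.reindex[OF inj]) (simp add: abs_minus_commute)
      have xT: "\<theta> j \<notin> T" unfolding T_def S_def using h\<theta>dist jk by auto
      have gap1: "\<forall>t\<in>T. \<bar>t - \<theta> j\<bar> \<ge> tm" unfolding T_def S_def using tm_le jk by auto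
      have gap2: "\<forall>s\<in>T. \<forall>t\<in>T. s \<noteq> t \<longrightarrow> \<bar>s - t\<bar> \<ge> tm" unfolding T_def S_def using tm_le by auto
      have tsp: "(\<Prod>t\<in>T. \<bar>t - \<theta> j\<bar>) \<ge> tm ^ card T * (fact (card {t\<in>T. t < \<theta> j}) * fact (card {t\<in>T. t > \<theta> j}))"
        by (rule two_side_prod[OF finT tm_pos xT gap1 gap2])
      have "card {t\<in>T. t < \<theta> j} + card {t\<in>T. t > \<theta> j} = card T"
      proof -
        have "T = {t\<in>T. t < \<theta> j} \<union> {t\<in>T. t > \<theta> j}" using xT by (auto, metis linorder_neqE)
        moreover have "{t\<in>T. t < \<theta> j} \<inter> {t\<in>T. t > \<theta> j} = {}" by auto
        ultimately show ?thesis using finT by (metis (no_types, lifting) card_Un_disjoint finite_Un)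
      qed
      hence zl: "zeta k \<le> fact (card {t\<in>T. t < \<theta> j}) * fact (card {t\<in>T. t > \<theta> j})"
        using zeta_le[of k] hk cT by simp
      have "(\<Prod>t\<in>T. \<bar>t - \<theta> j\<bar>) \<ge> tm ^ (k-1) * zeta k"
        using tsp zl cT tm_pos by (smt (verit, best) mult_left_mono zero_less_power)
      with s1 pT show ?thesis
        by (smt (verit, ccfv_SIG) mult.commute mult_left_mono pi_gt_zero zero_le_divide_iff zero_le_power)
    qed
    define L where "L = (\<Prod>p\<in>S. cmod (z j - z p))"
    define K where "K = (2/pi)^(k-1) * (zeta k * tm^(k-1))"
    have Kpos: "K > 0" unfolding K_def using zeta_pos tm_pos by simp
    have LK: "K \<le> L" using Lbound unfolding K_def L_def .
    have eta_nn: "eta k k z zh j \<ge> 0" unfolding eta_def by (simp add: prod_nonneg)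
    have "eta k k z zh j * m_min * K \<le> eta k k z zh j * cmod (a j) * L"
      using ha jk LK eta_nn hm Kpos by (intro mult_mono) auto
    also have "\<dots> = cmod (a j * poly (rp ws) (z j))" using peq L_def by (simp add: norm_mult)
    also have "\<dots> \<le> 2^(2*k-1) * N" by (rule bound)
    also have "\<dots> < 2^(2*k-1) * \<sigma>" using NS by simp
    also have "2^(2*k-1) * \<sigma> = B * (m_min * K)"
    proof -
      obtain n where kn: "k = Suc n" using hk by (cases k) auto
      have "B * (m_min * K) = 2^k * (pi^n * (2/pi)^n) * \<sigma> * ((zeta k * tm^n) / (zeta k * tm^n)) * (m_min / m_min)"
        unfolding B_def K_def kn by (simp add: field_simps)
      also have "\<dots> = 2^k * 2^n * \<sigma>" using zeta_pos tm_pos hm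
        by (simp add: power_divide)
      also have "\<dots> = 2^(2*k-1) * \<sigma>" unfolding kn by (simp add: power_add[symmetric])
      finally show ?thesis by simp
    qed
    finally have "eta k k z zh j * (m_min * K) < B * (m_min * K)" by (simp add: mult_ac)
    thus ?thesis using hm Kpos by (simp add: mult_less_cancel_right)
  qed
  have "norm_inf k (eta k k z zh) < B"
    unfolding norm_inf_def using key hk
    by (subst Max_less_iff) (auto simp: eta_def prod_nonneg lessThan_empty_iff)
  thus ?thesis unfolding Let_def B_def tm_def M_def z_def zh_def .
qed


end
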